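(* Let $I\subset(0,1)$ be an admissible mesh family for $\Omega$, and for $h\in I$ let $\Sigma_h$ be the set of $(d-1)$-dimensional closed faces (facets) of the convex polytope $\overline{\Omega_h}$. If $\Omega$ is strictly convex, then $$\lim_{I\ni h\to0}\ \sup_{\boldsymbol{K}\in\Sigma_h}\ \sup_{\boldsymbol{x},\boldsymbol{x}'\in\boldsymbol{K}}|\boldsymbol{x}-\boldsymbol{x}'|=0.$$
   Context: $\Omega\subset\mathbb{R}^d$ is a bounded open convex domain; it is strictly convex if $\lambda\boldsymbol{x}+(1-\lambda)\boldsymbol{x}'\in\Omega$ for all $\boldsymbol{x},\boldsymbol{x}'\in\overline\Omega$, $0<\lambda<1$. $\Omega_\delta=\{\boldsymbol{x}\in\Omega:\operatorname{dist}(\boldsymbol{x},\partial\Omega)>\delta\}$. A mesh of $\Omega$ with parameter $h>0$ is a finite set $\mathcal T_h$ of closed $d$-simplices contained in $\overline\Omega$ such that: (i) for $T\ne T'$ in $\mathcal T_h$, $T\cap T'$ is a common sub-simplex of both of dimension at most $d-1$; (ii) $h=\max_{T\in\mathcal T_h}\operatorname{diam}T$; (iii) $\Omega_h:=\operatorname{Int}(\bigcup_{T\in\mathcal T_h}T)$ is convex; (iv) every vertex of $\mathcal T_h$ lying on $\partial\Omega_h$ belongs to $\partial\Omega$. An admissible mesh family is a set $I\subset(0,1)$ having $0$ as its unique accumulation point, together with a mesh $\mathcal T_h$ of $\Omega$ with parameter $h$ for each $h\in I$, such that for every $\delta>0$ there is $h_\delta>0$ with $\overline{\Omega_\delta}\subset\Omega_h$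 whenever $h\in I$ and $h<h_\delta$. *)

theory Defs
  imports "HOL-Analysis.Analysis"
begin

definition strictly_convex :: "'a::euclidean_space set \<Rightarrow> bool" where
  "strictly_convex \<Omega> \<longleftrightarrow>
     (\<forall>x\<in>closure \<Omega>. \<forall>x'\<in>closure \<Omega>. x \<noteq> x' \<longrightarrow>
        (\<forall>t::real. 0 < t \<and> t < 1 \<longrightarrow> t *\<^sub>R x + (1 - t) *\<^sub>R x' \<in> \<Omega>))"

definition inner_set :: "'a::euclidean_space set \<Rightarrow> real \<Rightarrow> 'a set" where
  "inner_set \<Omega> \<delta> = {x \<in> \<Omega>. infdist x (frontier \<Omega>) > \<delta>}"

definition subsimplex :: "'a::euclidean_space set \<Rightarrow> 'a set \<Rightarrow> bool" where
  "subsimplex S T \<longleftrightarrow> (\<exists>C D. \<not> affine_dependent C \<and> T = convex hull C \<and> D \<subseteq> C \<and> S = convex hull D)"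

definition mesh_vertices :: "'a::euclidean_space set set \<Rightarrow> 'a set" where
  "mesh_vertices \<T> = (\<Union>T\<in>\<T>. {v. v extreme_point_of T})"

definition mesh_domain :: "'a::euclidean_space set set \<Rightarrow> 'a set" where
  "mesh_domain \<T> = interior (\<Union>\<T>)"

definition is_mesh :: "'a::euclidean_space set \<Rightarrow> 'a set set \<Rightarrow> real \<Rightarrow> bool" where
  "is_mesh \<Omega> \<T> h \<longleftrightarrow>
     finite \<T> \<and> \<T> \<noteq> {} \<and>
     (\<forall>T\<in>\<T>. int DIM('a) simplex T \<and> T \<subseteq> closure \<Omega>) \<and>
     (\<forall>T\<in>\<T>. \<forall>T'\<in>\<T>. T \<noteq> T' \<longrightarrow>
        subsimplex (T \<inter> T') T \<and> subsimplex (T \<inter> T') T' \<and> aff_dim (T \<inter> T') \<le> int DIM('a) - 1) \<and>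
     h = Max (diameter ` \<T>) \<and>
     convex (mesh_domain \<T>) \<and>
     (\<forall>v\<in>mesh_vertices \<T>. v \<in> frontier (mesh_domain \<T>) \<longrightarrow> v \<in> frontier \<Omega>)"

definition admissible_mesh_family ::
    "'a::euclidean_space set \<Rightarrow> real set \<Rightarrow> (real \<Rightarrow> 'a set set) \<Rightarrow> bool" where
  "admissible_mesh_family \<Omega> I \<T> \<longleftrightarrow>
     I \<subseteq> {0<..<1} \<and> (0::real) islimpt I \<and> (\<forall>y. y islimpt I \<longrightarrow> y = 0) \<and>
     (\<forall>h\<in>I. h > 0 \<and> is_mesh \<Omega> (\<T> h) h) \<and>
     (\<forall>\<delta>>0. \<exists>h\<delta>>0. \<forall>h\<in>I. h < h\<delta> \<longrightarrow> closure (inner_set \<Omega> \<delta>) \<subseteq> mesh_domain (\<T> h))"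

end

theory Submission imports Defs begin

lemma key_delta:
  fixes \<Omega> :: "'a::euclidean_space set"
  assumes "bounded \<Omega>" "open \<Omega>" "strictly_convex \<Omega>" "\<epsilon> > 0"
  shows "\<exists>\<delta>>0. \<forall>x\<in>closure \<Omega>. \<forall>x'\<in>closure \<Omega>. \<epsilon> \<le> dist x x' \<longrightarrow>
            (1/2) *\<^sub>R x + (1/2) *\<^sub>R x' \<in> inner_set \<Omega> \<delta>"
proof -
  define S where "S = (closure \<Omega> \<times> closure \<Omega>) \<inter> {p. \<epsilon> \<le> dist (fst p) (snd p)}"
  define g where "g = (\<lambda>p::'a\<times>'a. infdist ((1/2) *\<^sub>R fst p + (1/2) *\<^sub>R snd p) (frontier \<Omega>))"
  show ?thesis
  proof (cases "S = {}")
    case True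
    then show ?thesis by (auto simp: S_def intro!: exI[of _ 1])
  next
    case False
    have cS: "compact S" unfolding S_def
      by (intro compact_Int_closed compact_Times compact_closure[THEN iffD2] assms(1)
           closed_Collect_le continuous_intros)
    have cg: "continuous_on S g" unfolding g_def by (intro continuous_intros)
    obtain p0 where p0: "p0 \<in> S" "\<And>q. q \<in> S \<Longrightarrow> g p0 \<le> g q"
      using continuous_attains_inf[OF cS False cg] by blast
    have mem: "(1/2) *\<^sub>R fst p + (1/2) *\<^sub>R snd p \<in> \<Omega>" if "p \<in> S" for p
    proof -
      have "fst p \<noteq> snd p" "fst p \<in> closure \<Omega>" "snd p \<in> closure \<Omega>"
        using that assms(4) by (auto simp: S_def)
      then have H: "\<forall>t::real. 0 < t \<and> t < 1 \<longrightarrow> t *\<^sub>R fst p + (1 - t) *\<^sub>R snd p \<in> \<Omega>"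
        using assms(3) unfolding strictly_convex_def by blast
      have "(0::real) < 1/2 \<and> (1/2::real) < 1" by simp
      with H have "(1/2) *\<^sub>R fst p + (1 - 1/2) *\<^sub>R snd p \<in> \<Omega>" by blast
      then show ?thesis by simp
    qed
    have ne: "\<Omega> \<noteq> {}" using mem[OF p0(1)] by auto
    have nU: "\<Omega> \<noteq> UNIV" using assms(1) not_bounded_UNIV by auto
    have fne: "frontier \<Omega> \<noteq> {}" using ne nU frontier_eq_empty by blast
    have pos: "g p > 0" if "p \<in> S" for p
      unfolding g_def
      by (rule infdist_pos_not_in_closed) (use mem[OF that] assms(2) fne in \<open>auto simp: frontier_def interior_open\<close>)
    show ?thesis
    proof (intro exI[of _ "g p0 / 2"] conjI ballI impI)
      show "g p0 / 2 > 0" using pos[OF p0(1)] by simp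
      fix x x' assume "x \<in> closure \<Omega>" "x' \<in> closure \<Omega>" "\<epsilon> \<le> dist x x'"
      then have "(x,x') \<in> S" by (auto simp: S_def)
      then show "(1/2) *\<^sub>R x + (1/2) *\<^sub>R x' \<in> inner_set \<Omega> (g p0 / 2)"
        using p0(2)[of "(x,x')"] pos[OF p0(1)] mem[of "(x,x')"]
        by (auto simp: inner_set_def g_def)
    qed
  qed
qed
lemma is_meshD:
  fixes \<Omega> :: "'a::euclidean_space set"
  assumes "is_mesh \<Omega> \<T> h"
  shows "finite \<T>" "\<T> \<noteq> {}" "\<forall>T\<in>\<T>. int DIM('a) simplex T \<and> T \<subseteq> closure \<Omega>"
    "convex (mesh_domain \<T>)"
proof -
  have H: "finite \<T> \<and> \<T> \<noteq> {} \<and> (\<forall>T\<in>\<T>. int DIM('a) simplex T \<and> T \<subseteq> closure \<Omega>) \<and>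
     (\<forall>T\<in>\<T>. \<forall>T'\<in>\<T>. T \<noteq> T' \<longrightarrow>
        subsimplex (T \<inter> T') T \<and> subsimplex (T \<inter> T') T' \<and> aff_dim (T \<inter> T') \<le> int DIM('a) - 1) \<and>
     h = Max (diameter ` \<T>) \<and>
     convex (mesh_domain \<T>) \<and>
     (\<forall>v\<in>mesh_vertices \<T>. v \<in> frontier (mesh_domain \<T>) \<longrightarrow> v \<in> frontier \<Omega>)"
    using assms unfolding is_mesh_def .
  from H show "finite \<T>" by (elim conjE) assumption
  from H show "\<T> \<noteq> {}" by (elim conjE) assumption
  from H show "\<forall>T\<in>\<T>. int DIM('a) simplex T \<and> T \<subseteq> closure \<Omega>" by (elim conjE) assumption
  from H show "convex (mesh_domain \<T>)" by (elim conjE) assumption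
qed

lemma admD:
  assumes "admissible_mesh_family \<Omega> I \<T>"
  shows "I \<subseteq> {0<..<1}" "(0::real) islimpt I" "\<forall>h\<in>I. h > 0 \<and> is_mesh \<Omega> (\<T> h) h"
    "\<forall>\<delta>>0. \<exists>h\<delta>>0. \<forall>h\<in>I. h < h\<delta> \<longrightarrow> closure (inner_set \<Omega> \<delta>) \<subseteq> mesh_domain (\<T> h)"
proof -
  have H: "I \<subseteq> {0<..<1} \<and> (0::real) islimpt I \<and> (\<forall>y. y islimpt I \<longrightarrow> y = 0) \<and>
     (\<forall>h\<in>I. h > 0 \<and> is_mesh \<Omega> (\<T> h) h) \<and>
     (\<forall>\<delta>>0. \<exists>h\<delta>>0. \<forall>h\<in>I. h < h\<delta> \<longrightarrow> closure (inner_set \<Omega> \<delta>) \<subseteq> mesh_domain (\<T> h))"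
    using assms unfolding admissible_mesh_family_def .
  from H show "I \<subseteq> {0<..<1}" by (elim conjE) assumption
  from H show "(0::real) islimpt I" by (elim conjE) assumption
  from H show "\<forall>h\<in>I. h > 0 \<and> is_mesh \<Omega> (\<T> h) h" by (elim conjE) assumption
  from H show "\<forall>\<delta>>0. \<exists>h\<delta>>0. \<forall>h\<in>I. h < h\<delta> \<longrightarrow> closure (inner_set \<Omega> \<delta>) \<subseteq> mesh_domain (\<T> h)" by (elim conjE) assumption
qed

lemma facet_small:
  fixes M :: "'a::euclidean_space set"
  assumes "convex M" "open M" "closure M \<subseteq> closure \<Omega>" "inner_set \<Omega> \<delta> \<subseteq> M"
    and H: "\<forall>x\<in>closure \<Omega>. \<forall>x'\<in>closure \<Omega>. \<epsilon> \<le> dist x x' \<longrightarrow>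
            (1/2) *\<^sub>R x + (1/2) *\<^sub>R x' \<in> inner_set \<Omega> \<delta>"
    and K: "K facet_of closure M" and "\<epsilon> \<ge> 0"
  shows "diameter K \<le> \<epsilon>"
proof (rule diameter_le)
  show "K \<noteq> {} \<or> 0 \<le> \<epsilon>" using assms by simp
  fix x y assume xy: "x \<in> K" "y \<in> K"
  show "norm (x - y) \<le> \<epsilon>"
  proof (rule ccontr)
    assume "\<not> norm (x - y) \<le> \<epsilon>"
    then have d: "\<epsilon> \<le> dist x y" by (simp add: dist_norm)
    have KM: "K \<subseteq> closure M" using K facet_of_imp_subset by blast
    have m: "(1/2) *\<^sub>R x + (1/2) *\<^sub>R y \<in> M"
      using H xy KM assms(3,4) d by blast
    have cK: "convex K" using K facet_of_imp_face_of face_of_imp_convex by blast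
    have mK: "(1/2) *\<^sub>R x + (1/2) *\<^sub>R y \<in> K"
      using convexD[OF cK xy, of "1/2" "1/2"] by simp
    have "K \<noteq> closure M" using K by auto
    then have disj: "K \<inter> rel_interior (closure M) = {}"
      using K facet_of_imp_face_of face_of_disjoint_rel_interior by blast
    have "M \<subseteq> interior (closure M)"
      using assms(2) interior_mono[OF closure_subset, of M] by (simp add: interior_open)
    then have "M \<subseteq> rel_interior (closure M)" using interior_subset_rel_interior by blast
    then show False using disj m mK by blast
  qed
qed

lemma facet_exists:
  fixes \<T> :: "'a::euclidean_space set set"
  assumes "is_mesh \<Omega> \<T> h" "mesh_domain \<T> \<noteq> {}"
  shows "\<exists>K. K facet_of closure (mesh_domain \<T>)"
proof -
  define M where "M = mesh_domain \<T>"
  have fin: "finite \<T>" and smp: "\<And>T. T \<in> \<T> \<Longrightarrow> int DIM('a) simplex T"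
    and cM: "convex M"
    using is_meshD[OF assms(1)] by (auto simp: M_def)
  have M: "M = interior (\<Union>\<T>)" by (simp add: M_def mesh_domain_def)
  have clU: "closed (\<Union>\<T>)"
    by (rule closed_Union[OF fin]) (use smp closed_simplex in blast)
  have "closure M \<subseteq> \<Union>\<T>" unfolding M by (rule closure_minimal[OF interior_subset clU])
  moreover have "T \<subseteq> closure M" if TT: "T \<in> \<T>" for T
  proof -
    obtain C where C: "\<not> affine_dependent C" "int (card C) = int DIM('a) + 1" "T = convex hull C"
      using smp[OF TT] unfolding simplex_def by blast
    have "card C = Suc DIM('a)" using C(2) by simp
    then have "interior (convex hull C) \<noteq> {}" using C(1) interior_convex_hull_eq_empty[OF \<open>card C = Suc DIM('a)\<close>] by simp
    then have ne: "interior T \<noteq> {}" using C(3) by simp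
    have "closure (interior T) = closure T"
      by (rule convex_closure_interior[OF convex_simplex[OF smp[OF TT]] ne])
    also have "closure T = T" by (rule closure_closed[OF closed_simplex[OF smp[OF TT]]])
    finally have "T = closure (interior T)" by simp
    also have "\<dots> \<subseteq> closure M" unfolding M
      by (intro closure_mono interior_mono) (use TT in blast)
    finally show ?thesis .
  qed
  ultimately have eq: "closure M = \<Union>\<T>" by blast
  have "\<forall>T\<in>\<T>. \<exists>C. finite C \<and> T = convex hull C"
    using smp unfolding simplex by blast
  from bchoice[OF this] obtain f where f0: "\<forall>T\<in>\<T>. finite (f T) \<and> T = convex hull (f T)"
    by blast
  have f: "\<And>T. T \<in> \<T> \<Longrightarrow> finite (f T) \<and> T = convex hull (f T)" using f0 by (rule bspec)
  define V where "V = \<Union>(f ` \<T>)"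
  have "finite V" unfolding V_def
    by (rule finite_Union) (use fin conjunct1[OF f] in auto)
  have cU: "convex (\<Union>\<T>)" using convex_closure[OF cM] eq by simp
  have "convex hull V = \<Union>\<T>"
  proof
    show "convex hull V \<subseteq> \<Union>\<T>"
      proof (rule hull_minimal)
      show "V \<subseteq> \<Union>\<T>"
      proof
        fix x assume "x \<in> V"
        then obtain T where T: "T \<in> \<T>" "x \<in> f T" by (auto simp: V_def)
        then have "x \<in> convex hull (f T)" using hull_subset[of "f T" convex] by blast
        moreover have "convex hull (f T) = T" using conjunct2[OF f[OF T(1)]] by (rule sym)
        ultimately have "x \<in> T" by (simp only:)
        then show "x \<in> \<Union>\<T>" using T(1) by blast
      qed
    qed (rule cU)
    show "\<Union>\<T> \<subseteq> convex hull V"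
    proof
      fix x assume "x \<in> \<Union>\<T>"
      then obtain T where "T \<in> \<T>" "x \<in> T" by blast
      moreover have "convex hull (f T) = T" using conjunct2[OF f[OF \<open>T \<in> \<T>\<close>]] by (rule sym)
      ultimately have "x \<in> convex hull (f T)" by (simp only:)
      moreover have "convex hull (f T) \<subseteq> convex hull V"
        by (rule hull_mono) (use \<open>T \<in> \<T>\<close> in \<open>auto simp: V_def\<close>)
      ultimately show "x \<in> convex hull V" by blast
    qed
  qed
  then have poly: "polytope (closure M)" using eq polytope_convex_hull[OF \<open>finite V\<close>] by simp
  have "M \<subseteq> interior (closure M)"
    using interior_mono[OF closure_subset, of M] by (simp add: M interior_interior)
  then have "interior (closure M) \<noteq> {}" using assms(2) M_def by blast
  then have "aff_dim (closure M) = DIM('a)" by (rule aff_dim_nonempty_interior)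
  then have "0 < aff_dim (closure M)" by simp
  then obtain K where "K facet_of closure M" using polytope_facet_exists[OF poly] by blast
  then show ?thesis unfolding M_def by blast
qed

theorem lemma6p1:
  fixes \<Omega> :: "'a::euclidean_space set" and I :: "real set" and \<T> :: "real \<Rightarrow> 'a set set"
  assumes "bounded \<Omega>" and "open \<Omega>" and "convex \<Omega>"
    and "admissible_mesh_family \<Omega> I \<T>"
    and "strictly_convex \<Omega>"
  shows "((\<lambda>h. SUP K\<in>{K. K facet_of closure (mesh_domain (\<T> h))}. diameter K) \<longlongrightarrow> 0) (at 0 within I)"
proof -
  have Isub: "I \<subseteq> {0<..<1}" and lim: "(0::real) islimpt I"
    and mesh: "\<And>h. h \<in> I \<Longrightarrow> is_mesh \<Omega> (\<T> h) h"
    and Hd: "\<And>\<delta>. \<delta> > 0 \<Longrightarrow> \<exists>h\<delta>>0. \<forall>h\<in>I. h < h\<delta> \<longrightarrow> closure (inner_set \<Omega> \<delta>) \<subseteq> mesh_domain (\<T> h)"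
    using admD[OF assms(4)] by auto
  obtain h0 where "h0 \<in> I" using lim islimpt_def by (metis UNIV_I open_UNIV)
  then have m0: "is_mesh \<Omega> (\<T> h0) h0" by (rule mesh)
  have ne0: "\<T> h0 \<noteq> {}" and sT: "\<forall>T\<in>\<T> h0. int DIM('a) simplex T \<and> T \<subseteq> closure \<Omega>"
    using is_meshD[OF m0] by simp_all
  then obtain T where T: "T \<in> \<T> h0" "int DIM('a) simplex T" "T \<subseteq> closure \<Omega>"
    by blast
  obtain C where C: "int (card C) = int DIM('a) + 1" "T = convex hull C"
    using T(2) unfolding simplex_def by blast
  have "C \<noteq> {}" using C(1) by (metis card.empty of_nat_0 add_nonneg_pos of_nat_0_le_iff zero_less_one less_irrefl)
  then have "T \<noteq> {}" using C(2) by simp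
  then have "closure \<Omega> \<noteq> {}" using T(3) by (metis subset_empty)
  then obtain x0 where x0: "x0 \<in> \<Omega>" by (metis closure_empty ex_in_conv)
  have nU: "\<Omega> \<noteq> UNIV" using assms(1) not_bounded_UNIV by auto
  have fne: "frontier \<Omega> \<noteq> {}" using x0 nU frontier_eq_empty by blast
  have pos0: "infdist x0 (frontier \<Omega>) > 0"
    by (rule infdist_pos_not_in_closed) (use x0 assms(2) fne in \<open>auto simp: frontier_def interior_open\<close>)
  define \<delta>1 where "\<delta>1 = infdist x0 (frontier \<Omega>) / 2"
  have d1: "\<delta>1 > 0" "x0 \<in> inner_set \<Omega> \<delta>1" using pos0 x0 by (auto simp: \<delta>1_def inner_set_def)
  obtain h2 where h2: "h2 > 0" "\<And>h. h \<in> I \<Longrightarrow> h < h2 \<Longrightarrow> closure (inner_set \<Omega> \<delta>1) \<subseteq> mesh_domain (\<T> h)"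
    using Hd[OF d1(1)] by blast
  show ?thesis
    unfolding tendsto_iff
  proof (intro allI impI)
    fix \<epsilon> :: real assume "\<epsilon> > 0"
    then obtain \<delta> where \<delta>: "\<delta> > 0" and H: "\<forall>x\<in>closure \<Omega>. \<forall>x'\<in>closure \<Omega>. \<epsilon>/2 \<le> dist x x' \<longrightarrow>
            (1/2) *\<^sub>R x + (1/2) *\<^sub>R x' \<in> inner_set \<Omega> \<delta>"
      using key_delta[OF assms(1,2,5), of "\<epsilon>/2"] by auto
    obtain h1 where h1: "h1 > 0" "\<And>h. h \<in> I \<Longrightarrow> h < h1 \<Longrightarrow> closure (inner_set \<Omega> \<delta>) \<subseteq> mesh_domain (\<T> h)"
      using Hd[OF \<delta>] by blast
    show "\<forall>\<^sub>F h in at 0 within I. dist (SUP K\<in>{K. K facet_of closure (mesh_domain (\<T> h))}. diameter K) 0 < \<epsilon>"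
      unfolding eventually_at
    proof (intro exI[of _ "min h1 h2"] conjI ballI impI)
      show "min h1 h2 > 0" using h1 h2 by simp
      fix h assume hI: "h \<in> I" and hd: "h \<noteq> 0 \<and> dist h 0 < min h1 h2"
      have hlt: "h < h1" "h < h2" using hd Isub hI by (auto simp: dist_real_def)
      define M where "M = mesh_domain (\<T> h)"
      have mh: "is_mesh \<Omega> (\<T> h) h" using mesh[OF hI] .
      have cM: "convex M" using is_meshD(4)[OF mh] by (simp add: M_def)
      have oM: "open M" by (simp add: M_def mesh_domain_def)
      have "M \<subseteq> \<Union>(\<T> h)" by (simp add: M_def mesh_domain_def interior_subset)
      also have "\<dots> \<subseteq> closure \<Omega>" using is_meshD(3)[OF mh] by blast
      finally have "closure M \<subseteq> closure \<Omega>" by (simp add: closure_minimal)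
      have inM: "inner_set \<Omega> \<delta> \<subseteq> M" using h1(2)[OF hI hlt(1)] closure_subset M_def by blast
      have "x0 \<in> M" using h2(2)[OF hI hlt(2)] closure_subset d1(2) M_def by blast
      then obtain K0 where K0: "K0 facet_of closure M"
        using facet_exists[OF mh] M_def by blast
      have le: "diameter K \<le> \<epsilon>/2" if "K facet_of closure M" for K
        by (rule facet_small[OF cM oM \<open>closure M \<subseteq> closure \<Omega>\<close> inM H that]) (use \<open>\<epsilon> > 0\<close> in simp)
      have "bounded K0" using K0 facet_of_imp_subset \<open>closure M \<subseteq> closure \<Omega>\<close> assms(1)
        by (meson bounded_closure bounded_subset order_trans)
      then have ge0: "0 \<le> diameter K0" by (rule diameter_ge_0)
      have bdd: "bdd_above (diameter ` {K. K facet_of closure M})"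
        using le by (intro bdd_aboveI[of _ "\<epsilon>/2"]) auto
      have up: "(SUP K\<in>{K. K facet_of closure M}. diameter K) \<le> \<epsilon>/2"
        by (rule cSUP_least) (use K0 le in auto)
      have lo: "0 \<le> (SUP K\<in>{K. K facet_of closure M}. diameter K)"
        by (rule cSUP_upper2[OF bdd _ ge0]) (use K0 in simp)
      show "dist (SUP K\<in>{K. K facet_of closure (mesh_domain (\<T> h))}. diameter K) 0 < \<epsilon>"
        using up lo \<open>\<epsilon> > 0\<close> by (simp add: M_def dist_real_def)
    qed
  qed
qed

end
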